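(* Let $S$ and $R$ be finite sequences of formulas and $I,J$ models. Then $I\equiv_{\emptyset S\cdot R}J$ holds if and only if both $I\equiv_{\emptyset S}J$ and $I\equiv_{\emptyset R}J$ hold.
   Context: Propositional models are truth assignments over a finite set of variables; a formula used where a set of models is expected stands for its set of models. A doxastic state is a sequence $C=[C(0),\ldots,C(k)]$ of nonempty, pairwise disjoint sets of models covering all models; $I\le_C J$ iff $I\in C(i)$, $J\in C(j)$ with $i\le j$; $I\equiv_C J$ iff $I\le_C J$ and $J\le_C I$. The flat doxastic state $\emptyset$ is $[\text{all models}]$. Lexicographic revision: $C\,\mathrm{lex}(A)=[C(0)\cap A,\ldots,C(k)\cap A,C(0)\setminus A,\ldots,C(k)\setminus A]$, empty sets discarded. For a sequence of formulas $T=[T_1,\ldots,T_n]$, $\emptyset T$ denotes $\emptyset$ revised lexicographically by $T_1$, then $T_2$, ..., then $T_n$. $S\cdot R$ is concatenation. *)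

theory Defs
  imports Main
begin

datatype 'v form = Var 'v | Top | Bot | Neg "'v form"
  | And "'v form" "'v form" | Or "'v form" "'v form"

type_synonym 'v model = "'v \<Rightarrow> bool"

fun holds :: "'v model \<Rightarrow> 'v form \<Rightarrow> bool" where
  "holds I (Var x) = I x"
| "holds I Top = True"
| "holds I Bot = False"
| "holds I (Neg A) = (\<not> holds I A)"
| "holds I (And A B) = (holds I A \<and> holds I B)"
| "holds I (Or A B) = (holds I A \<or> holds I B)"

definition mods :: "'v form \<Rightarrow> 'v model set" where
  "mods A = {I. holds I A}"

type_synonym 'v doxstate = "'v model set list"

definition flat :: "'v doxstate" where
  "flat = [UNIV]"

definition lex :: "'v doxstate \<Rightarrow> 'v form \<Rightarrow> 'v doxstate" where
  "lex C A = filter (\<lambda>X. X \<noteq> {})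
     (map (\<lambda>X. X \<inter> mods A) C @ map (\<lambda>X. X - mods A) C)"

text \<open>\<emptyset>T: the flat state revised by T_1, then T_2, ..., then T_n.\<close>
definition revseq :: "'v form list \<Rightarrow> 'v doxstate" where
  "revseq T = foldl lex flat T"

definition le_C :: "'v doxstate \<Rightarrow> 'v model \<Rightarrow> 'v model \<Rightarrow> bool" where
  "le_C C I J = (\<exists>i j. i < length C \<and> j < length C \<and> I \<in> C ! i \<and> J \<in> C ! j \<and> i \<le> j)"

definition eq_C :: "'v doxstate \<Rightarrow> 'v model \<Rightarrow> 'v model \<Rightarrow> bool" where
  "eq_C C I J = (le_C C I J \<and> le_C C J I)"

end

theory Submission
  imports Defs
begin

definition same :: "'v doxstate \<Rightarrow> 'v model \<Rightarrow> 'v model \<Rightarrow> bool" where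
  "same C I J = (\<exists>X\<in>set C. I \<in> X \<and> J \<in> X)"

lemma s: "set (lex C A) = {Y. Y \<noteq> {} \<and> ((\<exists>X\<in>set C. Y = X \<inter> mods A) \<or> (\<exists>X\<in>set C. Y = X - mods A))}"
    unfolding lex_def by auto

lemma same_lex: "same (lex C A) I J \<longleftrightarrow> same C I J \<and> (holds I A \<longleftrightarrow> holds J A)"
proof
    assume "same (lex C A) I J"
    then obtain Y where Y: "Y \<in> set (lex C A)" "I \<in> Y" "J \<in> Y" unfolding same_def by blast
    then obtain X where X: "X \<in> set C" "Y = X \<inter> mods A \<or> Y = X - mods A" unfolding s by blast
    have "same C I J" using X Y unfolding same_def by blast
    moreover have "I \<in> mods A \<longleftrightarrow> J \<in> mods A" using X(2) Y by blast
    ultimately show "same C I J \<and> (holds I A \<longleftrightarrow> holds J A)" by (simp add: mods_def)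
next
    assume h: "same C I J \<and> (holds I A \<longleftrightarrow> holds J A)"
    then obtain X where X: "X \<in> set C" "I \<in> X" "J \<in> X" unfolding same_def by blast
    show "same (lex C A) I J"
    proof (cases "holds I A")
      case True
      then have i: "I \<in> X \<inter> mods A" "J \<in> X \<inter> mods A" using X h by (simp_all add: mods_def)
      then have "X \<inter> mods A \<noteq> {}" by blast
      then have "X \<inter> mods A \<in> set (lex C A)" unfolding s using X(1) by blast
      with i have "X \<inter> mods A \<in> set (lex C A)" "I \<in> X \<inter> mods A" "J \<in> X \<inter> mods A" by auto
      then show ?thesis unfolding same_def by (intro bexI[of _ "X \<inter> mods A"]) simp_all
    next
      case False
      then have i: "I \<in> X - mods A" "J \<in> X - mods A" using X h by (simp_all add: mods_def)
      then have "X - mods A \<noteq> {}" by blast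
      then have "X - mods A \<in> set (lex C A)" unfolding s using X(1) by blast
      with i have "X - mods A \<in> set (lex C A)" "I \<in> X - mods A" "J \<in> X - mods A" by auto
      then show ?thesis unfolding same_def by (intro bexI[of _ "X - mods A"]) simp_all
    qed
qed

lemma same_revseq: "same (revseq T) I J \<longleftrightarrow> (\<forall>A\<in>set T. holds I A \<longleftrightarrow> holds J A)"
proof (induction T rule: rev_induct)
  case Nil
  then show ?case by (simp add: revseq_def flat_def same_def)
next
  case (snoc x xs)
  then show ?case by (auto simp: revseq_def same_lex)
qed

definition uniq :: "'v doxstate \<Rightarrow> bool" where
  "uniq C = (\<forall>I. length (filter (\<lambda>X. I \<in> X) C) = 1)"

lemma uniq_lex: assumes "uniq C" shows "uniq (lex C A)"
proof -
  have "length (filter (\<lambda>X. I \<in> X) (lex C A)) = 1" for I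
  proof -
    have e: "filter (\<lambda>X. I \<in> X) (filter (\<lambda>X. X \<noteq> {}) L) = filter (\<lambda>X. I \<in> X) L" for L :: "'a model set list"
      by (induction L) auto
    show ?thesis
    proof (cases "I \<in> mods A")
      case True
      have "filter (\<lambda>X. I \<in> X) (map (\<lambda>X. X - mods A) C) = []"
        using True by (induction C) auto
      moreover have "length (filter (\<lambda>X. I \<in> X) (map (\<lambda>X. X \<inter> mods A) C)) = length (filter (\<lambda>X. I \<in> X) C)"
        using True by (induction C) auto
      moreover have "length (filter (\<lambda>X. I \<in> X) C) = 1" using assms unfolding uniq_def by blast
      ultimately show ?thesis unfolding lex_def e filter_append length_append by simp
    next
      case False
      have "filter (\<lambda>X. I \<in> X) (map (\<lambda>X. X \<inter> mods A) C) = []"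
        using False by (induction C) auto
      moreover have "length (filter (\<lambda>X. I \<in> X) (map (\<lambda>X. X - mods A) C)) = length (filter (\<lambda>X. I \<in> X) C)"
        using False by (induction C) auto
      moreover have "length (filter (\<lambda>X. I \<in> X) C) = 1" using assms unfolding uniq_def by blast
      ultimately show ?thesis unfolding lex_def e filter_append length_append by simp
    qed
  qed
  then show ?thesis by (simp add: uniq_def)
qed

lemma uniq_revseq: "uniq (revseq T)"
proof (induction T rule: rev_induct)
  case Nil
  then show ?case by (simp add: revseq_def flat_def uniq_def)
next
  case (snoc x xs)
  then show ?case by (simp add: revseq_def uniq_lex)
qed

lemma uniq_idx: assumes "uniq C" shows "\<exists>!i. i < length C \<and> I \<in> C ! i"
proof -
  have "length (filter (\<lambda>X. I \<in> X) C) = 1" using assms unfolding uniq_def by blast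
  then have "card {i. i < length C \<and> I \<in> C ! i} = 1"
    by (simp add: length_filter_conv_card)
  then obtain k where k: "{i. i < length C \<and> I \<in> C ! i} = {k}"
    by (auto simp: card_1_singleton_iff)
  show ?thesis
  proof
    show "k < length C \<and> I \<in> C ! k" using k by blast
  next
    fix i assume "i < length C \<and> I \<in> C ! i"
    then have "i \<in> {i. i < length C \<and> I \<in> C ! i}" by simp
    then show "i = k" using k by simp
  qed
qed

lemma eq_same: assumes "uniq C" shows "eq_C C I J \<longleftrightarrow> same C I J"
proof
  assume "eq_C C I J"
  then obtain i j i' j' where h: "i < length C" "j < length C" "I \<in> C ! i" "J \<in> C ! j" "i \<le> j"
    "i' < length C" "j' < length C" "J \<in> C ! j'" "I \<in> C ! i'" "j' \<le> i'"
    unfolding eq_C_def le_C_def by blast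
  have "i = i'" using uniq_idx[OF assms, of I] h by blast
  moreover have "j = j'" using uniq_idx[OF assms, of J] h by blast
  ultimately have "i = j" using h by simp
  then show "same C I J" using h unfolding same_def by (metis nth_mem)
next
  assume "same C I J"
  then obtain X where "X \<in> set C" "I \<in> X" "J \<in> X" unfolding same_def by blast
  then obtain i where "i < length C" "C ! i = X" by (metis in_set_conv_nth)
  then show "eq_C C I J" unfolding eq_C_def le_C_def using \<open>I \<in> X\<close> \<open>J \<in> X\<close> by blast
qed

theorem mainTheorem20:
  fixes S R :: "('v::finite) form list" and I J :: "'v model"
  shows "eq_C (revseq (S @ R)) I J \<longleftrightarrow> (eq_C (revseq S) I J \<and> eq_C (revseq R) I J)"
  by (simp add: eq_same[OF uniq_revseq] same_revseq) blast

end
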